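(* Let $g:\mathbb{R}^n\to\mathbb{R}\cup\{+\infty\}$ be a proper closed convex function and let $f=f_1-f_2$, where $f_1,f_2:\mathbb{R}^n\to\mathbb{R}$ are convex differentiable functions such that $\nabla f_1$ is Lipschitz continuous with modulus $L>0$, $\nabla f_2$ is Lipschitz continuous with modulus $l\ge 0$, and $L\ge l$. Let $F=f+g$, and assume $\inf F>-\infty$ and that this infimum is attained. Let $\{x^k\}$ be generated by Algorithm 1 (described in the context) with $\{\beta_k\}\subseteq\big[0,\sqrt{L/(L+l)}\,\big]$, let $\bar\beta=\sup_k\beta_k$, and let $\alpha\in\big[\tfrac{L+l}{2}\bar\beta^2,\tfrac{L}{2}\big]$. Then: (i) for every $z\in\operatorname{dom} g$ and every $k\ge 0$, $$F(x^{k+1})\le F(z)+\frac{L+l}{2}\|z-y^k\|^2-\frac{L}{2}\|x^{k+1}-z\|^2;$$ (ii) for all $k\ge0$, $$H_{k+1,\alpha}-H_{k,\alpha}\le\Big(-\frac L2+\alpha\Big)\|x^{k+1}-x^k\|^2+\Big(\frac{L+l}{2}\beta_k^2-\alpha\Big)\|x^k-x^{k-1}\|^2;$$ (iii) the sequence $\{H_{k,\alpha}\}$ is nonincreasing.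
   Context: For a proper closed convex $h$, $\mathrm{Prox}_h(v)=\arg\min_{x\in\mathbb{R}^n}\{h(x)+\tfrac12\|x-v\|^2\}$. Algorithm 1 (proximal gradient algorithm with extrapolation): choose $x^0\in\operatorname{dom} g$ and $\{\beta_k\}\subseteq[0,\sqrt{L/(L+l)}]$, set $x^{-1}=x^0$, and for $k=0,1,2,\dots$ set $y^k=x^k+\beta_k(x^k-x^{k-1})$ and $x^{k+1}=\mathrm{Prox}_{\frac1L g}\big(y^k-\tfrac1L\nabla f(y^k)\big)$. For $\alpha\ge0$, $H_{k,\alpha}:=F(x^k)+\alpha\|x^k-x^{k-1}\|^2$. *)

theory Defs
  imports "HOL-Analysis.Analysis"
begin

text \<open>Extended-real-valued functions h :: 'a => ereal model R^n -> R \<union> {+\<infinity>}.\<close>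

definition edom :: "('a \<Rightarrow> ereal) \<Rightarrow> 'a set" where
  "edom h = {x. h x < \<infinity>}"

definition proper_fun :: "('a \<Rightarrow> ereal) \<Rightarrow> bool" where
  "proper_fun h \<longleftrightarrow> (\<forall>x. h x \<noteq> -\<infinity>) \<and> (\<exists>x. h x < \<infinity>)"

definition closed_fun :: "('a::topological_space \<Rightarrow> ereal) \<Rightarrow> bool" where
  "closed_fun h \<longleftrightarrow> closed {(x, t::real). h x \<le> ereal t}"

definition convex_efun :: "('a::real_vector \<Rightarrow> ereal) \<Rightarrow> bool" where
  "convex_efun h \<longleftrightarrow> convex (edom h) \<and> convex_on (edom h) (\<lambda>x. real_of_ereal (h x))"

definition is_prox :: "('a::real_normed_vector \<Rightarrow> ereal) \<Rightarrow> 'a \<Rightarrow> 'a \<Rightarrow> bool" where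
  "is_prox h v p \<longleftrightarrow>
     (\<forall>x. h p + ereal ((1/2) * (norm (p - v))\<^sup>2) \<le> h x + ereal ((1/2) * (norm (x - v))\<^sup>2))"

end

theory Submission
  imports Defs
begin

lemma line_deriv:
  fixes h :: "'a::euclidean_space \<Rightarrow> real"
  assumes hd: "\<And>u. (h has_derivative (\<lambda>d. gr u \<bullet> d)) (at u)"
  shows "((\<lambda>t. h (y + t *\<^sub>R d)) has_real_derivative (gr (y + t *\<^sub>R d) \<bullet> d)) (at t within S)"
proof -
  have 1: "((\<lambda>t. y + t *\<^sub>R d) has_derivative (\<lambda>s. s *\<^sub>R d)) (at t within S)"
    by (auto intro!: derivative_eq_intros)
  have "((\<lambda>t. h (y + t *\<^sub>R d)) has_derivative (\<lambda>s. gr (y + t *\<^sub>R d) \<bullet> (s *\<^sub>R d))) (at t within S)"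
    using has_derivative_compose[OF 1 hd] .
  moreover have "(\<lambda>s. s * (gr (y + t *\<^sub>R d) \<bullet> d)) = (*) (gr (y + t *\<^sub>R d) \<bullet> d)"
    by (auto simp: fun_eq_iff)
  ultimately show ?thesis unfolding has_field_derivative_def by simp
qed

lemma descent:
  fixes h :: "'a::euclidean_space \<Rightarrow> real"
  assumes hd: "\<And>u. (h has_derivative (\<lambda>d. gr u \<bullet> d)) (at u)"
    and lip: "\<And>u v. norm (gr u - gr v) \<le> M * norm (u - v)"
  shows "h x \<le> h y + gr y \<bullet> (x - y) + M / 2 * (norm (x - y))\<^sup>2"
    and "h x \<ge> h y + gr y \<bullet> (x - y) - M / 2 * (norm (x - y))\<^sup>2"
proof -
  define d where "d = x - y"
  have bnd: "\<bar>(gr (y + t *\<^sub>R d) - gr y) \<bullet> d\<bar> \<le> M * t * (norm d)\<^sup>2" if "0 \<le> t" for t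
  proof -
    have "\<bar>(gr (y + t *\<^sub>R d) - gr y) \<bullet> d\<bar> \<le> norm (gr (y + t *\<^sub>R d) - gr y) * norm d"
      by (rule Cauchy_Schwarz_ineq2)
    also have "\<dots> \<le> M * norm (t *\<^sub>R d) * norm d"
      using lip[of "y + t *\<^sub>R d" y] by (simp add: mult_right_mono)
    also have "\<dots> = M * t * (norm d)\<^sup>2" using that by (simp add: power2_eq_square)
    finally show ?thesis .
  qed
  define \<phi> where "\<phi> t = h (y + t *\<^sub>R d) - t * (gr y \<bullet> d) - M / 2 * t\<^sup>2 * (norm d)\<^sup>2" for t
  have "\<phi> 0 \<ge> \<phi> 1"
  proof (rule DERIV_nonpos_imp_nonincreasing[of 0 1 \<phi>])
    fix t :: real assume t: "0 \<le> t" "t \<le> 1"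
    show "\<exists>D. DERIV \<phi> t :> D \<and> D \<le> 0"
      unfolding \<phi>_def
      apply (rule exI, rule conjI)
       apply (rule derivative_eq_intros line_deriv[OF hd] | simp)+
      using bnd[OF t(1)] by (auto simp: inner_diff_left mult_ac abs_le_iff)
  qed simp
  then show "h x \<le> h y + gr y \<bullet> (x - y) + M / 2 * (norm (x - y))\<^sup>2"
    by (simp add: \<phi>_def d_def)
  define \<psi> where "\<psi> t = h (y + t *\<^sub>R d) - t * (gr y \<bullet> d) + M / 2 * t\<^sup>2 * (norm d)\<^sup>2" for t
  have "\<psi> 0 \<le> \<psi> 1"
  proof (rule DERIV_nonneg_imp_nondecreasing[of 0 1 \<psi>])
    fix t :: real assume t: "0 \<le> t" "t \<le> 1"
    show "\<exists>D. DERIV \<psi> t :> D \<and> D \<ge> 0"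
      unfolding \<psi>_def
      apply (rule exI, rule conjI)
       apply (rule derivative_eq_intros line_deriv[OF hd] | simp)+
      using bnd[OF t(1)] by (auto simp: inner_diff_left mult_ac abs_le_iff)
  qed simp
  then show "h x \<ge> h y + gr y \<bullet> (x - y) - M / 2 * (norm (x - y))\<^sup>2"
    by (simp add: \<psi>_def d_def)
qed

lemma convex_grad:
  fixes h :: "'a::euclidean_space \<Rightarrow> real"
  assumes hd: "\<And>u. (h has_derivative (\<lambda>d. gr u \<bullet> d)) (at u)"
    and cv: "convex_on UNIV h"
  shows "h x \<ge> h y + gr y \<bullet> (x - y)"
proof -
  define d where "d = x - y"
  have c: "convex_on UNIV (\<lambda>t::real. h (y + t *\<^sub>R d))"
  proof (rule convex_onI)
    fix t a b :: real assume "0 < t" "t < 1"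
    have "y + ((1 - t) * a + t * b) *\<^sub>R d = (1 - t) *\<^sub>R (y + a *\<^sub>R d) + t *\<^sub>R (y + b *\<^sub>R d)"
      by (simp add: algebra_simps)
    then show "h (y + ((1 - t) *\<^sub>R a + t *\<^sub>R b) *\<^sub>R d) \<le> (1 - t) * h (y + a *\<^sub>R d) + t * h (y + b *\<^sub>R d)"
      using convex_onD[OF cv, of t "y + a *\<^sub>R d" "y + b *\<^sub>R d"] \<open>0 < t\<close> \<open>t < 1\<close> by simp
  qed simp
  have "h (y + 1 *\<^sub>R d) - h (y + 0 *\<^sub>R d) \<ge> (gr (y + 0 *\<^sub>R d) \<bullet> d) * (1 - 0)"
    by (rule convex_on_imp_above_tangent[OF c]) (auto intro: line_deriv[OF hd, of _ _ 0, simplified])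
  then show ?thesis by (simp add: d_def)
qed

lemma small_t:
  fixes A B :: real
  assumes "B \<ge> 0" and h: "\<And>t. 0 < t \<Longrightarrow> t < 1 \<Longrightarrow> 0 \<le> t * A + t\<^sup>2 * B"
  shows "A \<ge> 0"
proof (rule ccontr)
  assume "\<not> A \<ge> 0" hence A: "A < 0" by simp
  define t where "t = min (1/2) (- A / (2 * (B + 1)))"
  have "- A / (2 * (B + 1)) > 0" using A assms(1) by (intro divide_pos_pos) auto
  hence t0: "0 < t" "t < 1" by (auto simp: t_def)
  have "t * B \<le> (- A / (2 * (B + 1))) * B"
    using assms(1) by (intro mult_right_mono) (auto simp: t_def)
  also have "\<dots> < - A / 2"
  proof -
    have "(- A / (2 * (B + 1))) * B = (-A/2) * (B / (B+1))" using assms(1) by (simp add: field_simps)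
    also have "\<dots> < (-A/2) * 1" using A assms(1) by (intro mult_strict_left_mono) auto
    finally show ?thesis by simp
  qed
  finally have "A + t * B < 0" using A by linarith
  hence "t * (A + t * B) < 0" using t0 by (simp add: mult_pos_neg)
  moreover have "t * (A + t * B) = t * A + t\<^sup>2 * B" by (simp add: algebra_simps power2_eq_square)
  ultimately show False using h[OF t0] by linarith
qed

lemma prox_ineq:
  fixes G :: "'a::euclidean_space \<Rightarrow> real"
  assumes cD: "convex D" and cG: "convex_on D G" and pD: "p \<in> D" and zD: "z \<in> D" and L: "L > 0"
    and opt: "\<And>u. u \<in> D \<Longrightarrow> G p / L + (1/2) * (norm (p - v))\<^sup>2 \<le> G u / L + (1/2) * (norm (u - v))\<^sup>2"
  shows "G z \<ge> G p + L * ((v - p) \<bullet> (z - p))"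
proof -
  define A where "A = (G z - G p) / L - (v - p) \<bullet> (z - p)"
  define B where "B = (norm (z - p))\<^sup>2 / 2"
  have tA: "0 \<le> t * A + t\<^sup>2 * B" if t: "0 < t" "t < 1" for t
  proof -
    define u where "u = (1 - t) *\<^sub>R p + t *\<^sub>R z"
    have uD: "u \<in> D" using cD pD zD t by (simp add: u_def convex_alt)
    have Gu: "G u \<le> (1 - t) * G p + t * G z" using convex_onD[OF cG, of t p z] t pD zD by (simp add: u_def)
    have "u - v = (p - v) + t *\<^sub>R (z - p)" by (simp add: u_def algebra_simps)
    hence "(norm (u - v))\<^sup>2 = ((p - v) + t *\<^sub>R (z - p)) \<bullet> ((p - v) + t *\<^sub>R (z - p))"
      by (simp only: power2_norm_eq_inner)
    also have "\<dots> = (p - v) \<bullet> (p - v) + 2 * t * ((p - v) \<bullet> (z - p)) + t\<^sup>2 * ((z - p) \<bullet> (z - p))"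
      by (simp add: inner_add_left inner_add_right inner_commute power2_eq_square algebra_simps)
    finally have nu: "(norm (u - v))\<^sup>2 = (norm (p - v))\<^sup>2 + 2 * t * ((p - v) \<bullet> (z - p)) + t\<^sup>2 * (norm (z - p))\<^sup>2"
      by (simp only: power2_norm_eq_inner)
    have "G u / L \<le> ((1 - t) * G p + t * G z) / L" using Gu L by (simp add: divide_right_mono)
    hence "G p / L + (1/2) * (norm (p - v))\<^sup>2 \<le> ((1 - t) * G p + t * G z) / L + (1/2) * (norm (u - v))\<^sup>2"
      using opt[OF uD] by linarith
    moreover have "((1 - t) * G p + t * G z) / L = G p / L + t * ((G z - G p) / L)"
    proof -
      have "(1 - t) * G p + t * G z = G p + t * (G z - G p)" by (simp add: algebra_simps)
      thus ?thesis by (simp add: add_divide_distrib)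
    qed
    moreover have "(p - v) \<bullet> (z - p) = - ((v - p) \<bullet> (z - p))" by (simp add: inner_diff_left)
    ultimately have ineq: "(1/2) * (norm (p - v))\<^sup>2 \<le> t * ((G z - G p) / L) + (1/2) * (norm (u - v))\<^sup>2"
      by linarith
    have eqA: "t * A + t\<^sup>2 * B = t * ((G z - G p) / L) - t * ((v - p) \<bullet> (z - p)) + t\<^sup>2 * (norm (z - p))\<^sup>2 / 2"
      unfolding A_def B_def by (simp add: right_diff_distrib)
    have "t * ((p - v) \<bullet> (z - p)) = - (t * ((v - p) \<bullet> (z - p)))"
      using \<open>(p - v) \<bullet> (z - p) = - ((v - p) \<bullet> (z - p))\<close> by simp
    then show ?thesis using ineq nu eqA by linarith
  qed
  have "B \<ge> 0" by (simp add: B_def)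
  have "A \<ge> 0" by (rule small_t[of B A, OF \<open>B \<ge> 0\<close> tA])
  hence "(G z - G p) / L \<ge> (v - p) \<bullet> (z - p)" by (simp add: A_def)
  hence "G z - G p \<ge> L * ((v - p) \<bullet> (z - p))" using L by (simp add: pos_le_divide_eq mult.commute)
  thus ?thesis by simp
qed

theorem lemma3p1:
  fixes g :: "'a::euclidean_space \<Rightarrow> ereal"
    and f1 f2 :: "'a \<Rightarrow> real"
    and grad1 grad2 :: "'a \<Rightarrow> 'a"
    and L l alpha :: real
    and beta :: "nat \<Rightarrow> real"
    and x :: "nat \<Rightarrow> 'a"
  assumes g_proper: "proper_fun g"
    and g_closed: "closed_fun g"
    and g_convex: "convex_efun g"
    and f1_convex: "convex_on UNIV f1"
    and f2_convex: "convex_on UNIV f2"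
    and f1_grad: "\<And>u. (f1 has_derivative (\<lambda>h. grad1 u \<bullet> h)) (at u)"
    and f2_grad: "\<And>u. (f2 has_derivative (\<lambda>h. grad2 u \<bullet> h)) (at u)"
    and L_pos: "L > 0"
    and l_nonneg: "l \<ge> 0"
    and L_ge_l: "L \<ge> l"
    and grad1_lip: "\<And>u v. norm (grad1 u - grad1 v) \<le> L * norm (u - v)"
    and grad2_lip: "\<And>u v. norm (grad2 u - grad2 v) \<le> l * norm (u - v)"
    and inf_finite: "(INF u. ereal (f1 u - f2 u) + g u) > -\<infinity>"
    and inf_attained: "\<exists>u0. ereal (f1 u0 - f2 u0) + g u0 = (INF u. ereal (f1 u - f2 u) + g u)"
    and x0_dom: "x 0 \<in> edom g"
    and beta_range: "\<And>k. 0 \<le> beta k \<and> beta k \<le> sqrt (L / (L + l))"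
    and alg: "\<And>k. is_prox (\<lambda>u. ereal (1 / L) * g u)
                (x k + beta k *\<^sub>R (x k - x (k - 1))
                  - (1 / L) *\<^sub>R (grad1 (x k + beta k *\<^sub>R (x k - x (k - 1)))
                                 - grad2 (x k + beta k *\<^sub>R (x k - x (k - 1)))))
                (x (Suc k))"
    and alpha_lo: "(L + l) / 2 * (Sup (range beta))\<^sup>2 \<le> alpha"
    and alpha_hi: "alpha \<le> L / 2"
  shows
    "(\<forall>z\<in>edom g. \<forall>k.
        ereal (f1 (x (Suc k)) - f2 (x (Suc k))) + g (x (Suc k))
          \<le> ereal (f1 z - f2 z) + g z
             + ereal ((L + l) / 2 * (norm (z - (x k + beta k *\<^sub>R (x k - x (k - 1)))))\<^sup>2
                      - L / 2 * (norm (x (Suc k) - z))\<^sup>2))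
     \<and> (\<forall>k.
        (ereal (f1 (x (Suc k)) - f2 (x (Suc k))) + g (x (Suc k))
            + ereal (alpha * (norm (x (Suc k) - x k))\<^sup>2))
        - (ereal (f1 (x k) - f2 (x k)) + g (x k)
            + ereal (alpha * (norm (x k - x (k - 1)))\<^sup>2))
        \<le> ereal ((- L / 2 + alpha) * (norm (x (Suc k) - x k))\<^sup>2
                 + ((L + l) / 2 * (beta k)\<^sup>2 - alpha) * (norm (x k - x (k - 1)))\<^sup>2))
     \<and> decseq (\<lambda>k. ereal (f1 (x k) - f2 (x k)) + g (x k)
                    + ereal (alpha * (norm (x k - x (k - 1)))\<^sup>2))"
proof -
  define y where "y k = x k + beta k *\<^sub>R (x k - x (k - 1))" for k
  define v where "v k = y k - (1 / L) *\<^sub>R (grad1 (y k) - grad2 (y k))" for k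
  define G where "G = (\<lambda>u. real_of_ereal (g u))"
  define D where "D = edom g"
  have gfin: "g u = ereal (G u)" if "u \<in> D" for u
  proof -
    have "g u < \<infinity>" "g u \<noteq> -\<infinity>" using g_proper that by (auto simp: D_def edom_def proper_fun_def)
    thus "g u = ereal (G u)" by (cases "g u") (auto simp: G_def)
  qed
  have cD: "convex D" and cG: "convex_on D G"
    using g_convex by (auto simp: convex_efun_def D_def G_def)
  obtain u0 where u0: "g u0 < \<infinity>" using g_proper by (auto simp: proper_fun_def)
  have u0D: "u0 \<in> D" using u0 by (simp add: D_def edom_def)
  have alg': "ereal (1/L) * g (x (Suc k)) + ereal ((1/2) * (norm (x (Suc k) - v k))\<^sup>2)
      \<le> ereal (1/L) * g u + ereal ((1/2) * (norm (u - v k))\<^sup>2)" for k u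
    using alg[of k] unfolding is_prox_def v_def y_def by blast
  have xD: "x k \<in> D" for k
  proof (induction k)
    case 0 then show ?case using x0_dom by (simp add: D_def)
  next
    case (Suc k)
    show ?case
    proof (rule ccontr)
      assume "x (Suc k) \<notin> D"
      hence "g (x (Suc k)) = \<infinity>" by (simp add: D_def edom_def)
      thus False using alg'[of k u0] gfin[OF u0D] L_pos by simp
    qed
  qed
  have prox_real: "G (x (Suc k)) / L + (1/2) * (norm (x (Suc k) - v k))\<^sup>2 \<le> G u / L + (1/2) * (norm (u - v k))\<^sup>2"
    if "u \<in> D" for k u
    using alg'[of k u] gfin[OF that] gfin[OF xD[of "Suc k"]] by simp
  have partI: "f1 (x (Suc k)) - f2 (x (Suc k)) + G (x (Suc k))
      \<le> f1 z - f2 z + G z + ((L + l) / 2 * (norm (z - y k))\<^sup>2 - L / 2 * (norm (x (Suc k) - z))\<^sup>2)"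
    if zD: "z \<in> D" for z k
  proof -
    define p where "p = x (Suc k)"
    define yk where "yk = y k"
    have prox: "G z \<ge> G p + L * ((v k - p) \<bullet> (z - p))"
      unfolding p_def by (rule prox_ineq[OF cD cG xD zD L_pos prox_real])
    have e6: "L * ((v k - p) \<bullet> (z - p)) = - (L * ((p - yk) \<bullet> (z - p))) - (grad1 yk \<bullet> (z - p) - grad2 yk \<bullet> (z - p))"
      using L_pos by (simp add: v_def yk_def inner_diff_left inner_diff_right algebra_simps)
    have d1: "f1 p \<le> f1 yk + grad1 yk \<bullet> (p - yk) + L / 2 * (norm (p - yk))\<^sup>2"
      by (rule descent(1)[OF f1_grad grad1_lip])
    have d2: "f2 p \<ge> f2 yk + grad2 yk \<bullet> (p - yk)"
      by (rule convex_grad[OF f2_grad f2_convex])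
    have d3: "f1 z \<ge> f1 yk + grad1 yk \<bullet> (z - yk)"
      by (rule convex_grad[OF f1_grad f1_convex])
    have d4: "f2 z \<le> f2 yk + grad2 yk \<bullet> (z - yk) + l / 2 * (norm (z - yk))\<^sup>2"
      by (rule descent(1)[OF f2_grad grad2_lip])
    have e1: "grad1 yk \<bullet> (z - yk) = grad1 yk \<bullet> (z - p) + grad1 yk \<bullet> (p - yk)"
      by (simp add: inner_diff_right)
    have e2: "grad2 yk \<bullet> (z - yk) = grad2 yk \<bullet> (z - p) + grad2 yk \<bullet> (p - yk)"
      by (simp add: inner_diff_right)
    have zy: "z - yk = (p - yk) + (z - p)" by simp
    have e3: "(norm (z - yk))\<^sup>2 = (norm (p - yk))\<^sup>2 + 2 * ((p - yk) \<bullet> (z - p)) + (norm (z - p))\<^sup>2"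
    proof -
      define a where "a = p - yk"
      define b where "b = z - p"
      have "z - yk = a + b" by (simp add: a_def b_def)
      hence "(norm (z - yk))\<^sup>2 = (a + b) \<bullet> (a + b)" by (simp only: power2_norm_eq_inner)
      also have "\<dots> = a \<bullet> a + 2 * (a \<bullet> b) + b \<bullet> b"
        by (simp add: inner_add_left inner_add_right inner_commute)
      finally show ?thesis by (simp only: a_def b_def power2_norm_eq_inner)
    qed
    have e4: "norm (p - z) = norm (z - p)" by (rule norm_minus_commute)
    have key: "L / 2 * (norm (p - yk))\<^sup>2 + L * ((p - yk) \<bullet> (z - p)) = L / 2 * (norm (z - yk))\<^sup>2 - L / 2 * (norm (z - p))\<^sup>2"
      unfolding e3 by (simp add: algebra_simps)
    have e7: "(L + l) / 2 * (norm (z - yk))\<^sup>2 = L / 2 * (norm (z - yk))\<^sup>2 + l / 2 * (norm (z - yk))\<^sup>2"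
      by (simp add: algebra_simps)
    show ?thesis
      unfolding p_def[symmetric] yk_def[symmetric] e4 e7
      using prox e6 d1 d2 d3 d4 e1 e2 key by linarith
  qed
  have I: "\<forall>z\<in>edom g. \<forall>k.
        ereal (f1 (x (Suc k)) - f2 (x (Suc k))) + g (x (Suc k))
          \<le> ereal (f1 z - f2 z) + g z
             + ereal ((L + l) / 2 * (norm (z - (x k + beta k *\<^sub>R (x k - x (k - 1)))))\<^sup>2
                      - L / 2 * (norm (x (Suc k) - z))\<^sup>2)"
  proof (intro ballI allI)
    fix z k assume "z \<in> edom g"
    hence zD: "z \<in> D" by (simp add: D_def)
    show "ereal (f1 (x (Suc k)) - f2 (x (Suc k))) + g (x (Suc k))
          \<le> ereal (f1 z - f2 z) + g z
             + ereal ((L + l) / 2 * (norm (z - (x k + beta k *\<^sub>R (x k - x (k - 1)))))\<^sup>2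
                      - L / 2 * (norm (x (Suc k) - z))\<^sup>2)"
      using partI[OF zD, of k] gfin[OF zD] gfin[OF xD[of "Suc k"]] by (simp add: y_def)
  qed
  have IIr: "(f1 (x (Suc k)) - f2 (x (Suc k)) + G (x (Suc k)) + alpha * (norm (x (Suc k) - x k))\<^sup>2)
        - (f1 (x k) - f2 (x k) + G (x k) + alpha * (norm (x k - x (k - 1)))\<^sup>2)
        \<le> (- L / 2 + alpha) * (norm (x (Suc k) - x k))\<^sup>2
                 + ((L + l) / 2 * (beta k)\<^sup>2 - alpha) * (norm (x k - x (k - 1)))\<^sup>2" for k
  proof -
    have a: "f1 (x (Suc k)) - f2 (x (Suc k)) + G (x (Suc k))
      \<le> f1 (x k) - f2 (x k) + G (x k) + ((L + l) / 2 * (norm (x k - y k))\<^sup>2 - L / 2 * (norm (x (Suc k) - x k))\<^sup>2)"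
      by (rule partI[OF xD])
    have "norm (x k - y k) = beta k * norm (x k - x (k - 1))"
      using beta_range[of k] by (simp add: y_def)
    hence b: "(L + l) / 2 * (norm (x k - y k))\<^sup>2 = (L + l) / 2 * (beta k)\<^sup>2 * (norm (x k - x (k - 1)))\<^sup>2"
      by (simp add: power_mult_distrib)
    have c: "(- L / 2 + alpha) * (norm (x (Suc k) - x k))\<^sup>2
                 + ((L + l) / 2 * (beta k)\<^sup>2 - alpha) * (norm (x k - x (k - 1)))\<^sup>2
           = - (L / 2 * (norm (x (Suc k) - x k))\<^sup>2) + alpha * (norm (x (Suc k) - x k))\<^sup>2
             + (L + l) / 2 * (beta k)\<^sup>2 * (norm (x k - x (k - 1)))\<^sup>2 - alpha * (norm (x k - x (k - 1)))\<^sup>2"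
      by (simp add: algebra_simps)
    show ?thesis unfolding c using a unfolding b by linarith
  qed
  have H: "ereal (f1 (x k) - f2 (x k)) + g (x k) + ereal (alpha * (norm (x k - x (k - 1)))\<^sup>2)
     = ereal (f1 (x k) - f2 (x k) + G (x k) + alpha * (norm (x k - x (k - 1)))\<^sup>2)" for k
    using gfin[OF xD[of k]] by simp
  have II: "\<forall>k.
        (ereal (f1 (x (Suc k)) - f2 (x (Suc k))) + g (x (Suc k))
            + ereal (alpha * (norm (x (Suc k) - x k))\<^sup>2))
        - (ereal (f1 (x k) - f2 (x k)) + g (x k)
            + ereal (alpha * (norm (x k - x (k - 1)))\<^sup>2))
        \<le> ereal ((- L / 2 + alpha) * (norm (x (Suc k) - x k))\<^sup>2
                 + ((L + l) / 2 * (beta k)\<^sup>2 - alpha) * (norm (x k - x (k - 1)))\<^sup>2)"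
  proof
    fix k
    show "(ereal (f1 (x (Suc k)) - f2 (x (Suc k))) + g (x (Suc k))
            + ereal (alpha * (norm (x (Suc k) - x k))\<^sup>2))
        - (ereal (f1 (x k) - f2 (x k)) + g (x k)
            + ereal (alpha * (norm (x k - x (k - 1)))\<^sup>2))
        \<le> ereal ((- L / 2 + alpha) * (norm (x (Suc k) - x k))\<^sup>2
                 + ((L + l) / 2 * (beta k)\<^sup>2 - alpha) * (norm (x k - x (k - 1)))\<^sup>2)"
      using H[of "Suc k"] H[of k] IIr[of k] by simp
  qed
  have bdd: "bdd_above (range beta)"
    using beta_range by (intro bdd_aboveI[of _ "sqrt (L / (L + l))"]) auto
  have III: "decseq (\<lambda>k. ereal (f1 (x k) - f2 (x k)) + g (x k)
                    + ereal (alpha * (norm (x k - x (k - 1)))\<^sup>2))"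
  proof (rule decseq_SucI)
    fix k
    have bk: "beta k \<le> Sup (range beta)" using bdd by (intro cSup_upper) auto
    have "(beta k)\<^sup>2 \<le> (Sup (range beta))\<^sup>2"
      using beta_range[of k] bk by (intro power_mono) auto
    hence "(L + l) / 2 * (beta k)\<^sup>2 \<le> (L + l) / 2 * (Sup (range beta))\<^sup>2"
      using L_pos l_nonneg by (intro mult_left_mono) auto
    hence c1: "(L + l) / 2 * (beta k)\<^sup>2 - alpha \<le> 0" using alpha_lo by linarith
    have c2: "- L / 2 + alpha \<le> 0" using alpha_hi by linarith
    have "(- L / 2 + alpha) * (norm (x (Suc k) - x k))\<^sup>2
                 + ((L + l) / 2 * (beta k)\<^sup>2 - alpha) * (norm (x k - x (k - 1)))\<^sup>2 \<le> 0"
    proof -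
      have "(- L / 2 + alpha) * (norm (x (Suc k) - x k))\<^sup>2 \<le> 0"
        using c2 by (rule mult_nonpos_nonneg) simp
      moreover have "((L + l) / 2 * (beta k)\<^sup>2 - alpha) * (norm (x k - x (k - 1)))\<^sup>2 \<le> 0"
        using c1 by (rule mult_nonpos_nonneg) simp
      ultimately show ?thesis by linarith
    qed
    thus "ereal (f1 (x (Suc k)) - f2 (x (Suc k))) + g (x (Suc k))
                    + ereal (alpha * (norm (x (Suc k) - x (Suc k - 1)))\<^sup>2)
        \<le> ereal (f1 (x k) - f2 (x k)) + g (x k)
                    + ereal (alpha * (norm (x k - x (k - 1)))\<^sup>2)"
      using H[of "Suc k"] H[of k] IIr[of k] by simp
  qed
  show ?thesis using I II III by blast
qed

end
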